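(* Let $d\ge1$, let $\zeta=\{\zeta_k\}_{k\in\mathbb{Z}^d}$ be a stationary random field with $\mathrm{E}(\zeta_0)=0$ and $\mathrm{Var}(\zeta_0)<\infty$, and let $\delta>0$. Suppose that for all $\psi_1,\psi_2\in\mathscr{U}$ with $\mathrm{sep}(\mathrm{supp}[\psi_1],\mathrm{supp}[\psi_2])\ge\delta$ the pair $(S_n(\psi_1),S_n(\psi_2))$ is asymptotically independent as $n\to\infty$. Then for every integer $N\ge2$ and all $\varphi_1,\ldots,\varphi_N\in\mathscr{U}$ with $\mathrm{sep}(\mathrm{supp}[\varphi_i],\mathrm{supp}[\varphi_j])\ge\delta$ for all $1\le i\ne j\le N$, the vector $(S_n(\varphi_1),\ldots,S_n(\varphi_N))$ is asymptotically independent as $n\to\infty$.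
   Context: $\mathscr{U}$ is the set of finite linear combinations of indicator functions of boxes $(a_1,b_1]\times\cdots\times(a_d,b_d]\subset\mathbb{R}^d$ with $a_i<b_i$ real; $\mathrm{supp}[\varphi]$ is the support of $\varphi$. For $A,B\subset\mathbb{R}^d$, $\mathrm{sep}(A,B)=\inf\{\max_{1\le i\le d}|x_i-y_i|: x\in A,y\in B\}$. For $\varphi\in\mathscr{U}$, $S_n(\varphi):=n^{-d/2}\sum_{k\in\mathbb{Z}^d}\zeta_k\varphi(k/n)$. A sequence of random vectors $(X_{1,n},\ldots,X_{N,n})$ ($N\ge2$) is asymptotically independent as $n\to\infty$ if for all real $\xi_1,\ldots,\xi_N$, $\lim_{n\to\infty}\big|\mathrm{E}[e^{i\xi_1X_{1,n}+\cdots+i\xi_NX_{N,n}}]-\prod_{j=1}^N\mathrm{E}[e^{i\xi_jX_{j,n}}]\big|=0$. *)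

theory Defs
  imports "HOL-Probability.Probability"
begin

text \<open>Points of R^d are \<open>real ^ 'd\<close>, lattice points of Z^d are \<open>int ^ 'd\<close>,
  with d = CARD('d) \<ge> 1.\<close>

definition box_oc :: "real ^ 'd \<Rightarrow> real ^ 'd \<Rightarrow> (real ^ 'd) set" where
  "box_oc a b = {x. \<forall>i. a $ i < x $ i \<and> x $ i \<le> b $ i}"

definition U_fun :: "(real ^ 'd \<Rightarrow> real) set" where
  "U_fun = {\<phi>. \<exists>(m::nat) (c::nat \<Rightarrow> real) (a::nat \<Rightarrow> real ^ 'd) b.
              (\<forall>j<m. \<forall>i. a j $ i < b j $ i) \<and>
              \<phi> = (\<lambda>x. \<Sum>j<m. c j * indicator (box_oc (a j) (b j)) x)}"

definition supp :: "(real ^ 'd \<Rightarrow> real) \<Rightarrow> (real ^ 'd) set" where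
  "supp \<phi> = {x. \<phi> x \<noteq> 0}"

text \<open>Separation in the sup-norm; the infimum is taken in the extended reals so that
  the infimum of the empty set is +\<infinity>.\<close>
definition sep :: "(real ^ 'd) set \<Rightarrow> (real ^ 'd) set \<Rightarrow> ereal" where
  "sep A B = (INF p \<in> A \<times> B. ereal (Max (range (\<lambda>i. \<bar>fst p $ i - snd p $ i\<bar>))))"

definition scale_lattice :: "int ^ 'd \<Rightarrow> nat \<Rightarrow> real ^ 'd" where
  "scale_lattice k n = (\<chi> i. real_of_int (k $ i) / real n)"

text \<open>S_n(\<phi>) = n^{-d/2} \<Sum>_{k \<in> Z^d} \<zeta>_k \<phi>(k/n); for \<phi> \<in> U only finitely many terms are nonzero.\<close>
definition S_n :: "(int ^ 'd \<Rightarrow> 'a \<Rightarrow> real) \<Rightarrow> nat \<Rightarrow> (real ^ 'd \<Rightarrow> real) \<Rightarrow> 'a \<Rightarrow> real" where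
  "S_n \<zeta> n \<phi> \<omega> = real n powr (- real CARD('d) / 2) *
      (\<Sum>k\<in>{k. \<phi> (scale_lattice k n) \<noteq> 0}. \<zeta> k \<omega> * \<phi> (scale_lattice k n))"

definition asymp_indep :: "'a measure \<Rightarrow> nat \<Rightarrow> (nat \<Rightarrow> nat \<Rightarrow> 'a \<Rightarrow> real) \<Rightarrow> bool" where
  "asymp_indep M N X \<longleftrightarrow> (\<forall>\<xi>::nat \<Rightarrow> real.
     (\<lambda>n. cmod ((LINT \<omega>|M. exp (\<i> * complex_of_real (\<Sum>j<N. \<xi> j * X j n \<omega>)))
               - (\<Prod>j<N. LINT \<omega>|M. exp (\<i> * complex_of_real (\<xi> j * X j n \<omega>)))))
     \<longlonglongrightarrow> 0)"

definition stationary_field :: "'a measure \<Rightarrow> (int ^ 'd \<Rightarrow> 'a \<Rightarrow> real) \<Rightarrow> bool" where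
  "stationary_field M \<zeta> \<longleftrightarrow> (\<forall>F h. finite F \<longrightarrow>
     distr M (Pi\<^sub>M F (\<lambda>_. borel)) (\<lambda>\<omega>. \<lambda>k\<in>F. \<zeta> (k + h) \<omega>) =
     distr M (Pi\<^sub>M F (\<lambda>_. borel)) (\<lambda>\<omega>. \<lambda>k\<in>F. \<zeta> k \<omega>))"

end

theory Submission
  imports Defs
begin

lemma char_le1:
  assumes "prob_space M"
  shows "cmod (LINT \<omega>|M. exp (\<i> * complex_of_real (f \<omega>))) \<le> 1"
proof -
  have "cmod (LINT \<omega>|M. exp (\<i> * complex_of_real (f \<omega>)))
        \<le> (LINT \<omega>|M. cmod (exp (\<i> * complex_of_real (f \<omega>))))"
    by (rule integral_norm_bound)
  also have "\<dots> = 1"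
    using assms by (simp add: prob_space.prob_space)
  finally show ?thesis .
qed

lemma asymp_indep_cong:
  assumes "\<And>j. j < N \<Longrightarrow> X j = Y j"
  shows "asymp_indep M N X = asymp_indep M N Y"
proof -
  have e1: "\<And>\<xi> n \<omega>. (\<Sum>j<N. \<xi> j * X j n \<omega>) = (\<Sum>j<N. \<xi> j * Y j n \<omega>)"
    using assms by (intro sum.cong) auto
  have e2: "\<And>\<xi> n. (\<Prod>j<N. LINT \<omega>|M. exp (\<i> * complex_of_real (\<xi> j * X j n \<omega>)))
      = (\<Prod>j<N. LINT \<omega>|M. exp (\<i> * complex_of_real (\<xi> j * Y j n \<omega>)))"
    using assms by (intro prod.cong) auto
  show ?thesis unfolding asymp_indep_def by (simp only: e1 e2)
qed

lemma finite_int_vec: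
  fixes A :: "'d::finite \<Rightarrow> int set"
  assumes "\<And>i. finite (A i)"
  shows "finite {k::int^'d. \<forall>i. k $ i \<in> A i}"
proof -
  have "{k::int^'d. \<forall>i. k $ i \<in> A i} \<subseteq> (\<lambda>f. \<chi> i. f i) ` (Pi\<^sub>E UNIV A)"
  proof
    fix k :: "int^'d" assume "k \<in> {k. \<forall>i. k $ i \<in> A i}"
    then have "(\<lambda>i. k $ i) \<in> Pi\<^sub>E UNIV A" by auto
    moreover have "k = (\<chi> i. (\<lambda>i. k $ i) i)" by simp
    ultimately show "k \<in> (\<lambda>f. \<chi> i. f i) ` (Pi\<^sub>E UNIV A)" by blast
  qed
  moreover have "finite (Pi\<^sub>E (UNIV::'d set) A)"
    using assms by (intro finite_PiE) auto
  ultimately show ?thesis by (meson finite_imageI finite_subset)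
qed

lemma U_fun_finite:
  fixes \<phi> :: "real ^ 'd \<Rightarrow> real"
  assumes "\<phi> \<in> U_fun" "n > 0"
  shows "finite {k. \<phi> (scale_lattice k n) \<noteq> 0}"
proof -
  obtain m :: nat and c :: "nat \<Rightarrow> real" and a b :: "nat \<Rightarrow> real^'d" where ab: "\<forall>j<m. \<forall>i. a j $ i < b j $ i"
    and phi: "\<phi> = (\<lambda>x. \<Sum>j<m. c j * indicator (box_oc (a j) (b j)) x)"
    using assms(1) unfolding U_fun_def mem_Collect_eq by (elim exE conjE) (rule that; assumption)
  let ?B = "\<lambda>j. {k::int^'d. \<forall>i. k $ i \<in> {\<lfloor>real n * a j $ i\<rfloor> .. \<lceil>real n * b j $ i\<rceil>}}"
  have "{k. \<phi> (scale_lattice k n) \<noteq> 0} \<subseteq> (\<Union>j<m. ?B j)"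
  proof
    fix k assume k: "k \<in> {k. \<phi> (scale_lattice k n) \<noteq> 0}"
    have "\<exists>j\<in>{..<m}. c j * indicator (box_oc (a j) (b j)) (scale_lattice k n) \<noteq> (0::real)"
    proof (rule ccontr)
      assume nz: "\<not> (\<exists>j\<in>{..<m}. c j * indicator (box_oc (a j) (b j)) (scale_lattice k n) \<noteq> (0::real))"
      have "\<phi> (scale_lattice k n) = 0" unfolding phi
        by (rule sum.neutral) (use nz in blast)
      then show False using k by simp
    qed
    then obtain j where j0: "j < m" "c j * indicator (box_oc (a j) (b j)) (scale_lattice k n) \<noteq> (0::real)"
      by blast
    have j: "scale_lattice k n \<in> box_oc (a j) (b j)"
      using j0(2) by (auto simp: indicator_def split: if_splits)
    have np: "real n > 0" using assms(2) by simp
    have "\<forall>i. k $ i \<in> {\<lfloor>real n * a j $ i\<rfloor> .. \<lceil>real n * b j $ i\<rceil>}"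
    proof
      fix i
      have h: "a j $ i < real_of_int (k $ i) / real n" "real_of_int (k $ i) / real n \<le> b j $ i"
        using j by (auto simp: box_oc_def scale_lattice_def)
      have h1: "real n * a j $ i < real_of_int (k $ i)" using h(1) np by (simp add: field_simps)
      have h2: "real_of_int (k $ i) \<le> real n * b j $ i" using h(2) np by (simp add: field_simps)
      have "\<lfloor>real n * a j $ i\<rfloor> \<le> k $ i" using h1 by (simp add: floor_le_iff)
      moreover have "k $ i \<le> \<lceil>real n * b j $ i\<rceil>" using h2 by (simp add: le_ceiling_iff)
      ultimately show "k $ i \<in> {\<lfloor>real n * a j $ i\<rfloor> .. \<lceil>real n * b j $ i\<rceil>}" by simp
    qed
    then show "k \<in> (\<Union>j<m. ?B j)" using j0(1) by blast
  qed
  moreover have "finite (\<Union>j<m. ?B j)"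
    by (intro finite_UN_I finite_lessThan finite_int_vec) auto
  ultimately show ?thesis by (rule finite_subset)
qed

lemma S_n_over:
  assumes "finite F" "{k. \<phi> (scale_lattice k n) \<noteq> 0} \<subseteq> F"
  shows "S_n \<zeta> n \<phi> \<omega> = real n powr (- real CARD('d) / 2) *
      (\<Sum>k\<in>F. \<zeta> k \<omega> * \<phi> (scale_lattice (k::int^'d) n))"
  unfolding S_n_def
  by (rule arg_cong[where f="\<lambda>x. _ * x"], rule sum.mono_neutral_left) (use assms in auto)

lemma S_n_scale:
  "S_n \<zeta> n (\<lambda>x. c * \<phi> x) \<omega> = c * S_n \<zeta> n \<phi> \<omega>"
proof (cases "c = 0")
  case True then show ?thesis by (simp add: S_n_def)
next
  case False
  then have "{k. c * \<phi> (scale_lattice k n) \<noteq> 0} = {k. \<phi> (scale_lattice k n) \<noteq> 0}" by auto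
  then show ?thesis unfolding S_n_def
    by (simp add: sum_distrib_left algebra_simps)
qed

lemma S_n_sum:
  fixes \<phi> :: "nat \<Rightarrow> real ^ 'd \<Rightarrow> real"
  assumes J: "finite J" and fin: "\<And>j. j \<in> J \<Longrightarrow> finite {k. \<phi> j (scale_lattice k n) \<noteq> 0}"
  shows "S_n \<zeta> n (\<lambda>x. \<Sum>j\<in>J. c j * \<phi> j x) \<omega> = (\<Sum>j\<in>J. c j * S_n \<zeta> n (\<phi> j) \<omega>)"
proof -
  define F where "F = (\<Union>j\<in>J. {k. \<phi> j (scale_lattice k n) \<noteq> 0})"
  have F: "finite F" unfolding F_def using J fin by auto
  have sub: "{k. \<phi> j (scale_lattice k n) \<noteq> 0} \<subseteq> F" if "j \<in> J" for j
    unfolding F_def using that by auto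
  have sub2: "{k. (\<Sum>j\<in>J. c j * \<phi> j (scale_lattice k n)) \<noteq> 0} \<subseteq> F"
  proof
    fix k assume "k \<in> {k. (\<Sum>j\<in>J. c j * \<phi> j (scale_lattice k n)) \<noteq> 0}"
    then have "(\<Sum>j\<in>J. c j * \<phi> j (scale_lattice k n)) \<noteq> 0" by simp
    then have "\<exists>j\<in>J. c j * \<phi> j (scale_lattice k n) \<noteq> 0"
      using sum.neutral[of J "\<lambda>j. c j * \<phi> j (scale_lattice k n)"] by blast
    then obtain j where "j \<in> J" "\<phi> j (scale_lattice k n) \<noteq> 0"
      by auto
    then show "k \<in> F" unfolding F_def by auto
  qed
  let ?P = "real n powr (- real CARD('d) / 2)"
  have "S_n \<zeta> n (\<lambda>x. \<Sum>j\<in>J. c j * \<phi> j x) \<omega>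
      = ?P * (\<Sum>k\<in>F. \<zeta> k \<omega> * (\<Sum>j\<in>J. c j * \<phi> j (scale_lattice k n)))"
    by (rule S_n_over[OF F sub2])
  also have "\<dots> = ?P * (\<Sum>k\<in>F. \<Sum>j\<in>J. c j * (\<zeta> k \<omega> * \<phi> j (scale_lattice k n)))"
    by (intro arg_cong[where f="\<lambda>x. ?P * x"] sum.cong refl) (simp add: sum_distrib_left algebra_simps)
  also have "\<dots> = ?P * (\<Sum>j\<in>J. \<Sum>k\<in>F. c j * (\<zeta> k \<omega> * \<phi> j (scale_lattice k n)))"
    by (rule arg_cong[where f="\<lambda>x. ?P * x"], rule sum.swap)
  also have "\<dots> = ?P * (\<Sum>j\<in>J. c j * (\<Sum>k\<in>F. \<zeta> k \<omega> * \<phi> j (scale_lattice k n)))"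
    by (simp only: sum_distrib_left)
  also have "\<dots> = (\<Sum>j\<in>J. c j * (?P * (\<Sum>k\<in>F. \<zeta> k \<omega> * \<phi> j (scale_lattice k n))))"
    by (subst sum_distrib_left) (rule sum.cong[OF refl], rule mult.left_commute)
  also have "\<dots> = (\<Sum>j\<in>J. c j * S_n \<zeta> n (\<phi> j) \<omega>)"
  proof (rule sum.cong[OF refl])
    fix j assume "j \<in> J"
    show "c j * (?P * (\<Sum>k\<in>F. \<zeta> k \<omega> * \<phi> j (scale_lattice k n))) = c j * S_n \<zeta> n (\<phi> j) \<omega>"
      by (subst S_n_over[OF F sub[OF \<open>j \<in> J\<close>]]) (rule refl)
  qed
  finally show ?thesis .
qed

lemma sum_split_add: "(\<Sum>j<m1+m2::nat. f j) = (\<Sum>j<m1. f j) + (\<Sum>j<m2. f (m1 + j)) "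
  by (induction m2) (auto simp: add.assoc)

lemma U_fun_zero: "(\<lambda>x::real^'d. 0) \<in> U_fun"
  unfolding U_fun_def mem_Collect_eq
  apply (rule exI[where x="0::nat"])
  apply (rule exI[where x="\<lambda>_. 0::real"])
  apply (rule exI[where x="\<lambda>_. 0::real^'d"])
  apply (rule exI[where x="\<lambda>_. 0::real^'d"])
  by simp

lemma U_fun_scale:
  fixes \<phi> :: "real^'d \<Rightarrow> real"
  assumes "\<phi> \<in> U_fun"
  shows "(\<lambda>x. c * \<phi> x) \<in> U_fun"
proof -
  obtain m :: nat and c' :: "nat \<Rightarrow> real" and a b :: "nat \<Rightarrow> real^'d" where ab: "\<forall>j<m. \<forall>i. a j $ i < b j $ i"
    and p1: "\<phi> = (\<lambda>x. \<Sum>j<m. c' j * indicator (box_oc (a j) (b j)) x)"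
    using assms(1) unfolding U_fun_def mem_Collect_eq by (elim exE conjE) (rule that; assumption)
  have "(\<lambda>x. c * \<phi> x) = (\<lambda>x. \<Sum>j<m. (c * c' j) * indicator (box_oc (a j) (b j)) x)"
    unfolding p1 by (simp only: sum_distrib_left mult.assoc)
  then show ?thesis unfolding U_fun_def mem_Collect_eq
    by (intro exI conjI) (rule ab, assumption)
qed

lemma U_fun_add:
  fixes \<phi> \<psi> :: "real^'d \<Rightarrow> real"
  assumes "\<phi> \<in> U_fun" "\<psi> \<in> U_fun"
  shows "(\<lambda>x. \<phi> x + \<psi> x) \<in> U_fun"
proof -
  obtain m1 :: nat and c1 :: "nat \<Rightarrow> real" and a1 b1 :: "nat \<Rightarrow> real^'d" where ab1: "\<forall>j<m1. \<forall>i. a1 j $ i < b1 j $ i"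
    and p1: "\<phi> = (\<lambda>x. \<Sum>j<m1. c1 j * indicator (box_oc (a1 j) (b1 j)) x)"
    using assms(1) unfolding U_fun_def mem_Collect_eq by (elim exE conjE) (rule that; assumption)
  obtain m2 :: nat and c2 :: "nat \<Rightarrow> real" and a2 b2 :: "nat \<Rightarrow> real^'d" where ab2: "\<forall>j<m2. \<forall>i. a2 j $ i < b2 j $ i"
    and p2: "\<psi> = (\<lambda>x. \<Sum>j<m2. c2 j * indicator (box_oc (a2 j) (b2 j)) x)"
    using assms(2) unfolding U_fun_def mem_Collect_eq by (elim exE conjE) (rule that; assumption)
  define c where "c j = (if j < m1 then c1 j else c2 (j - m1))" for j
  define a where "a j = (if j < m1 then a1 j else a2 (j - m1))" for j
  define b where "b j = (if j < m1 then b1 j else b2 (j - m1))" for j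
  have "\<forall>j<m1+m2. \<forall>i. a j $ i < b j $ i"
    using ab1 ab2 unfolding a_def b_def by auto
  moreover have "(\<lambda>x. \<phi> x + \<psi> x) = (\<lambda>x. \<Sum>j<m1+m2. c j * indicator (box_oc (a j) (b j)) x)"
    unfolding sum_split_add p1 p2 c_def a_def b_def by simp
  ultimately show ?thesis unfolding U_fun_def by blast
qed

lemma U_fun_sum:
  fixes N :: nat and \<phi> :: "nat \<Rightarrow> real^'d \<Rightarrow> real"
  assumes "\<forall>j<N. \<phi> j \<in> U_fun"
  shows "(\<lambda>x. \<Sum>j<N. c j * \<phi> j x) \<in> U_fun"
  using assms
proof (induction N)
  case 0 then show ?case using U_fun_zero by simp
next
  case (Suc N)
  then show ?case
    using U_fun_add[OF Suc.IH U_fun_scale[of "\<phi> N" "c N"]] by simp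
qed

lemma sep_ge:
  assumes "\<And>x y. x \<in> A \<Longrightarrow> y \<in> B \<Longrightarrow> \<exists>A' B'. x \<in> A' \<and> y \<in> B' \<and> sep A' B' \<ge> ereal \<delta>"
  shows "sep A B \<ge> ereal \<delta>"
  unfolding sep_def
proof (rule INF_greatest)
  fix p assume "p \<in> A \<times> B"
  then obtain x y where p: "p = (x, y)" "x \<in> A" "y \<in> B" by auto
  then obtain A' B' where h: "x \<in> A'" "y \<in> B'" "sep A' B' \<ge> ereal \<delta>" using assms by blast
  have "sep A' B' \<le> ereal (Max (range (\<lambda>i. \<bar>fst p $ i - snd p $ i\<bar>)))"
    unfolding sep_def using h p by (intro INF_lower) auto
  then show "ereal \<delta> \<le> ereal (Max (range (\<lambda>i. \<bar>fst p $ i - snd p $ i\<bar>)))"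
    using h(3) by (meson order_trans)
qed

theorem lemma2p6:
  fixes M :: "'a measure" and \<zeta> :: "int ^ 'd \<Rightarrow> 'a \<Rightarrow> real" and \<delta> :: real
  assumes "prob_space M"
    and "\<And>k. \<zeta> k \<in> borel_measurable M"
    and "stationary_field M \<zeta>"
    and "integrable M (\<zeta> 0)" and "(LINT \<omega>|M. \<zeta> 0 \<omega>) = 0"
    and "integrable M (\<lambda>\<omega>. (\<zeta> 0 \<omega>)\<^sup>2)"
    and "\<delta> > 0"
    and "\<And>\<psi>1 \<psi>2. \<psi>1 \<in> U_fun \<Longrightarrow> \<psi>2 \<in> U_fun \<Longrightarrow> sep (supp \<psi>1) (supp \<psi>2) \<ge> ereal \<delta> \<Longrightarrow>
           asymp_indep M 2 (\<lambda>j n. S_n \<zeta> n (if j = 0 then \<psi>1 else \<psi>2))"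
  shows "\<forall>(N::nat) (\<phi>::nat \<Rightarrow> real ^ 'd \<Rightarrow> real). N \<ge> 2 \<longrightarrow> (\<forall>j<N. \<phi> j \<in> U_fun) \<longrightarrow>
           (\<forall>i<N. \<forall>j<N. i \<noteq> j \<longrightarrow> sep (supp (\<phi> i)) (supp (\<phi> j)) \<ge> ereal \<delta>) \<longrightarrow>
           asymp_indep M N (\<lambda>j n. S_n \<zeta> n (\<phi> j))"
proof (intro allI impI)
  fix N :: nat and \<phi> :: "nat \<Rightarrow> real ^ 'd \<Rightarrow> real"
  assume N2: "N \<ge> 2" and UU: "\<forall>j<N. \<phi> j \<in> U_fun"
    and SS: "\<forall>i<N. \<forall>j<N. i \<noteq> j \<longrightarrow> sep (supp (\<phi> i)) (supp (\<phi> j)) \<ge> ereal \<delta>"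
  from N2 have gen: "(\<forall>j<N. \<phi> j \<in> U_fun) \<longrightarrow>
           (\<forall>i<N. \<forall>j<N. i \<noteq> j \<longrightarrow> sep (supp (\<phi> i)) (supp (\<phi> j)) \<ge> ereal \<delta>) \<longrightarrow>
           asymp_indep M N (\<lambda>j n. S_n \<zeta> n (\<phi> j))"
  proof (induction N rule: dec_induct)
    case base
    show ?case
    proof (intro impI)
      assume U: "\<forall>j<2. \<phi> j \<in> U_fun"
        and S: "\<forall>i<2. \<forall>j<2. i \<noteq> j \<longrightarrow> ereal \<delta> \<le> sep (supp (\<phi> i)) (supp (\<phi> j))"
      have U0: "\<phi> 0 \<in> U_fun" and U1: "\<phi> 1 \<in> U_fun" using U by auto
      have S01: "ereal \<delta> \<le> sep (supp (\<phi> 0)) (supp (\<phi> 1))" using S by auto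
      have A0: "asymp_indep M 2 (\<lambda>j n. S_n \<zeta> n (if j = 0 then \<phi> 0 else \<phi> 1))"
        by (rule assms(8)[OF U0 U1 S01])
      have eqv: "asymp_indep M 2 (\<lambda>j n. S_n \<zeta> n (if j = 0 then \<phi> 0 else \<phi> 1))
           = asymp_indep M 2 (\<lambda>j n. S_n \<zeta> n (\<phi> j))"
        by (rule asymp_indep_cong) (auto simp: less_2_cases_iff)
      show "asymp_indep M 2 (\<lambda>j n. S_n \<zeta> n (\<phi> j))"
        using eqv A0 by (rule iffD1)
    qed
  next
    case (step N)
    show ?case
    proof (intro impI)
      assume U: "\<forall>j<Suc N. \<phi> j \<in> U_fun"
        and S: "\<forall>i<Suc N. \<forall>j<Suc N. i \<noteq> j \<longrightarrow> ereal \<delta> \<le> sep (supp (\<phi> i)) (supp (\<phi> j))"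
      have IH: "asymp_indep M N (\<lambda>j n. S_n \<zeta> n (\<phi> j))"
        using step.IH U S by simp
      show "asymp_indep M (Suc N) (\<lambda>j n. S_n \<zeta> n (\<phi> j))"
        unfolding asymp_indep_def
      proof
        fix \<xi> :: "nat \<Rightarrow> real"
        define ch where "ch = (\<lambda>f::'a \<Rightarrow> real. LINT \<omega>|M. exp (\<i> * complex_of_real (f \<omega>)))"
        define \<psi>1 where "\<psi>1 = (\<lambda>x. \<Sum>j<N. \<xi> j * \<phi> j x)"
        define \<psi>2 where "\<psi>2 = (\<lambda>x. \<xi> N * \<phi> N x)"
        have U1: "\<psi>1 \<in> U_fun" unfolding \<psi>1_def using U by (intro U_fun_sum) auto
        have U2: "\<psi>2 \<in> U_fun" unfolding \<psi>2_def using U by (intro U_fun_scale) auto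
        have sp: "ereal \<delta> \<le> sep (supp \<psi>1) (supp \<psi>2)"
        proof (rule sep_ge)
          fix x y assume "x \<in> supp \<psi>1" "y \<in> supp \<psi>2"
          then have hx: "(\<Sum>j<N. \<xi> j * \<phi> j x) \<noteq> 0" and hy: "\<xi> N * \<phi> N y \<noteq> 0"
            unfolding supp_def \<psi>1_def \<psi>2_def by simp_all
          from hx have "\<exists>j\<in>{..<N}. \<xi> j * \<phi> j x \<noteq> 0"
            using sum.neutral[of "{..<N}" "\<lambda>j. \<xi> j * \<phi> j x"] by blast
          then obtain j where j: "j < N" "\<phi> j x \<noteq> 0" by auto
          from hy have y: "\<phi> N y \<noteq> 0" by auto
          show "\<exists>A' B'. x \<in> A' \<and> y \<in> B' \<and> ereal \<delta> \<le> sep A' B'"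
            using S j y by (intro exI[of _ "supp (\<phi> j)"] exI[of _ "supp (\<phi> N)"]) (auto simp: supp_def)
        qed
        have A2: "asymp_indep M 2 (\<lambda>j n. S_n \<zeta> n (if j = 0 then \<psi>1 else \<psi>2))"
          using assms(8)[OF U1 U2 sp] .
        have eA: "\<And>n \<omega>. (\<Sum>j<(2::nat). (\<lambda>_. 1::real) j * S_n \<zeta> n (if j = 0 then \<psi>1 else \<psi>2) \<omega>)
              = S_n \<zeta> n \<psi>1 \<omega> + S_n \<zeta> n \<psi>2 \<omega>"
          by (simp add: numeral_2_eq_2)
        have eB: "\<And>n. (\<Prod>j<(2::nat). LINT \<omega>|M. exp (\<i> * complex_of_real ((\<lambda>_. 1::real) j * S_n \<zeta> n (if j = 0 then \<psi>1 else \<psi>2) \<omega>)))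
              = ch (S_n \<zeta> n \<psi>1) * ch (S_n \<zeta> n \<psi>2)"
          unfolding ch_def by (simp add: numeral_2_eq_2)
        have L1: "(\<lambda>n. cmod (ch (\<lambda>\<omega>. S_n \<zeta> n \<psi>1 \<omega> + S_n \<zeta> n \<psi>2 \<omega>)
                  - ch (S_n \<zeta> n \<psi>1) * ch (S_n \<zeta> n \<psi>2))) \<longlonglongrightarrow> 0"
          using A2[unfolded asymp_indep_def, rule_format, of "\<lambda>_. 1"]
          unfolding eA eB ch_def .
        from IH[unfolded asymp_indep_def, rule_format, of \<xi>]
        have L2: "(\<lambda>n. cmod (ch (\<lambda>\<omega>. \<Sum>j<N. \<xi> j * S_n \<zeta> n (\<phi> j) \<omega>)
                  - (\<Prod>j<N. ch (\<lambda>\<omega>. \<xi> j * S_n \<zeta> n (\<phi> j) \<omega>)))) \<longlonglongrightarrow> 0"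
          unfolding ch_def .
        show "(\<lambda>n. cmod ((LINT \<omega>|M. exp (\<i> * complex_of_real (\<Sum>j<Suc N. \<xi> j * S_n \<zeta> n (\<phi> j) \<omega>)))
               - (\<Prod>j<Suc N. LINT \<omega>|M. exp (\<i> * complex_of_real (\<xi> j * S_n \<zeta> n (\<phi> j) \<omega>)))))
              \<longlonglongrightarrow> 0"
        proof (rule tendsto_sandwich[OF _ _ tendsto_const tendsto_add_zero[OF L1 L2]])
          show "\<forall>\<^sub>F n in sequentially. 0 \<le> cmod ((LINT \<omega>|M. exp (\<i> * complex_of_real (\<Sum>j<Suc N. \<xi> j * S_n \<zeta> n (\<phi> j) \<omega>)))
               - (\<Prod>j<Suc N. LINT \<omega>|M. exp (\<i> * complex_of_real (\<xi> j * S_n \<zeta> n (\<phi> j) \<omega>))))"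
            by simp
          show "\<forall>\<^sub>F n in sequentially. cmod ((LINT \<omega>|M. exp (\<i> * complex_of_real (\<Sum>j<Suc N. \<xi> j * S_n \<zeta> n (\<phi> j) \<omega>)))
               - (\<Prod>j<Suc N. LINT \<omega>|M. exp (\<i> * complex_of_real (\<xi> j * S_n \<zeta> n (\<phi> j) \<omega>))))
              \<le> cmod (ch (\<lambda>\<omega>. S_n \<zeta> n \<psi>1 \<omega> + S_n \<zeta> n \<psi>2 \<omega>)
                  - ch (S_n \<zeta> n \<psi>1) * ch (S_n \<zeta> n \<psi>2)) +
                cmod (ch (\<lambda>\<omega>. \<Sum>j<N. \<xi> j * S_n \<zeta> n (\<phi> j) \<omega>)
                  - (\<Prod>j<N. ch (\<lambda>\<omega>. \<xi> j * S_n \<zeta> n (\<phi> j) \<omega>)))"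
            using eventually_gt_at_top[of 0]
          proof eventually_elim
            case (elim n)
            have fin: "\<And>j. j \<in> {..<N} \<Longrightarrow> finite {k. \<phi> j (scale_lattice k n) \<noteq> 0}"
              using U elim by (intro U_fun_finite) auto
            have e1: "S_n \<zeta> n \<psi>1 = (\<lambda>\<omega>. \<Sum>j<N. \<xi> j * S_n \<zeta> n (\<phi> j) \<omega>)"
              unfolding \<psi>1_def by (rule ext, rule S_n_sum[OF finite_lessThan fin])
            have e2: "S_n \<zeta> n \<psi>2 = (\<lambda>\<omega>. \<xi> N * S_n \<zeta> n (\<phi> N) \<omega>)"
              unfolding \<psi>2_def by (rule ext, rule S_n_scale)
            define a where "a = ch (\<lambda>\<omega>. \<Sum>j<Suc N. \<xi> j * S_n \<zeta> n (\<phi> j) \<omega>)"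
            define b where "b = ch (\<lambda>\<omega>. \<Sum>j<N. \<xi> j * S_n \<zeta> n (\<phi> j) \<omega>)"
            define c where "c = ch (\<lambda>\<omega>. \<xi> N * S_n \<zeta> n (\<phi> N) \<omega>)"
            define p where "p = (\<Prod>j<N. ch (\<lambda>\<omega>. \<xi> j * S_n \<zeta> n (\<phi> j) \<omega>))"
            have c1: "cmod c \<le> 1" unfolding c_def ch_def by (rule char_le1[OF assms(1)])
            have eq: "a - p * c = (a - b * c) + (b - p) * c" by (simp add: algebra_simps)
            have "cmod (a - p * c) \<le> cmod (a - b * c) + cmod ((b - p) * c)"
              unfolding eq by (rule norm_triangle_ineq)
            moreover have "cmod ((b - p) * c) \<le> cmod (b - p)"
              using c1 by (simp add: norm_mult mult_left_le)
            ultimately have ineq: "cmod (a - p * c) \<le> cmod (a - b * c) + cmod (b - p)" by linarith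
            have hA: "ch (\<lambda>\<omega>. S_n \<zeta> n \<psi>1 \<omega> + S_n \<zeta> n \<psi>2 \<omega>) = a"
              unfolding a_def e1 e2 by simp
            have hB: "ch (S_n \<zeta> n \<psi>1) = b" unfolding b_def e1 ..
            have hC: "ch (S_n \<zeta> n \<psi>2) = c" unfolding c_def e2 ..
            have hA': "(LINT \<omega>|M. exp (\<i> * complex_of_real (\<Sum>j<Suc N. \<xi> j * S_n \<zeta> n (\<phi> j) \<omega>))) = a"
              unfolding a_def ch_def ..
            have hP: "(\<Prod>j<Suc N. LINT \<omega>|M. exp (\<i> * complex_of_real (\<xi> j * S_n \<zeta> n (\<phi> j) \<omega>))) = p * c"
              unfolding p_def c_def ch_def by simp
            show ?case unfolding hA hB hC hA' hP using ineq unfolding b_def p_def .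
          qed
        qed
      qed
    qed
  qed
  then show "asymp_indep M N (\<lambda>j n. S_n \<zeta> n (\<phi> j))" using UU SS by blast
qed

end
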